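(* There exist a family of Boolean functions $f_n:\{0,1\}^n\to\{0,1\}$ and a family of vtrees $T_n$ on the variable set $\{x_1,\dots,x_n\}$ of $f_n$ such that both $f_n$ and its negation $\overline{f_n}$ can be represented by structured $d$-DNNFs respecting $T_n$ of size polynomial in $n$, whereas every SDD respecting $T_n$ that represents $f_n$ has size $2^{\Omega(n)}$. (For instance, for $n$ divisible by $10$ one may take $f_n$ to be the hidden weighted bit function $\mathrm{HWB}_n(x_1,\dots,x_n)=x_{\|x\|}$, where $\|x\|=x_1+\dots+x_n$ and the output is $0$ if $\|x\|=0$, and $T_n$ the vtree whose root has a left subtree with $\tfrac{6}{10}n$ leaves and a right subtree with $\tfrac{4}{10}n$ leaves, both subtrees being right-linear, i.e. for every inner node the left child is a leaf.)
   Context: An NNF on a variable set $X$ is a Boolean circuit with fan-in 2 $\wedge$-gates and unbounded fan-in $\vee$-gates whose inputs are literals $x,\overline{x}$ ($x\in X$) or the constants $\bot,\top$; its size is its number of gates. For a gate $u$, $\mathrm{vars}(u)$ is the set of variables whose literals occur in the subcircuit rooted at $u$. An NNF is decomposable (a DNNF) if for every $\wedge$-gate the two children have disjoint variable sets; it is deterministic (a $d$-DNNF) if for every $\vee$-gate the functions computed at its children are pairwise not simultaneously satisfiable. A vtree for $X$ is a full rooted binary tree whose leaves are in bijection with $X$; for a vtree node $v$, $\mathrm{vars}(v)$ is the set of variables at leaves below $v$. An $\wedge$-gate $u$ with children $u_l,u_r$ respects a vtree node $v$ with children $v_l,v_r$ if $\mathrm{vars}(u_l)\subseteq \mathrm{vars}(v_l)$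 and $\mathrm{vars}(u_r)\subseteq\mathrm{vars}(v_r)$; a (d-)DNNF respects $T$ (is a structured (d-)DNNF w.r.t. $T$) if every $\wedge$-gate respects some node of $T$. A set of Boolean functions $\{f_1,\dots,f_\ell\}$ on the same variables is a partition if they are pairwise disjoint (never simultaneously 1), none equals the constant $\bot$, and their disjunction is $\top$. An SDD respecting a vtree $T$ is defined inductively: a single node labeled $\bot$ or $\top$ (any $T$); a single node labeled by a literal on a variable of $T$; or an $\vee$-gate whose inputs are $\wedge$-gates $g_1,\dots,g_\ell$, each $g_i$ having inputs $p_i,s_i$, where $v$ is an inner node of $T$ with left child $v_L$ and right child $v_R$, the subcircuits at $p_1,\dots,p_\ell$ are SDDs respecting the subtree of $T$ rooted at $v_L$, those at $s_1,\dots,s_\ell$ are SDDs respecting the subtree rooted at $v_R$, and the functions computed at $p_1,\dots,p_\ell$ form a partition. *)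

theory Defs
  imports Complex_Main
begin

datatype 'v vtree = VLeaf 'v | VNode "'v vtree" "'v vtree"

fun leaves :: "'v vtree \<Rightarrow> 'v list" where
  "leaves (VLeaf x) = [x]"
| "leaves (VNode l r) = leaves l @ leaves r"

fun subtrees :: "'v vtree \<Rightarrow> 'v vtree set" where
  "subtrees (VLeaf x) = {VLeaf x}"
| "subtrees (VNode l r) = insert (VNode l r) (subtrees l \<union> subtrees r)"

definition vtree_for :: "'v vtree \<Rightarrow> 'v set \<Rightarrow> bool" where
  "vtree_for T X \<longleftrightarrow> distinct (leaves T) \<and> set (leaves T) = X"

section \<open>NNF circuits (DAGs given as topologically ordered gate lists)\<close>

text \<open>An input of a gate: a literal (Lit x True = x, Lit x False = negated x),
  a constant, or (a reference to) an earlier gate.\<close>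
datatype 'v inp = Lit 'v bool | Const bool | Gate nat

datatype 'v gate = And "'v inp" "'v inp" | Or "'v inp list"

type_synonym 'v circuit = "'v gate list \<times> 'v inp"

definition csize :: "'v circuit \<Rightarrow> nat" where
  "csize C = length (fst C)"

fun gate_inputs :: "'v gate \<Rightarrow> 'v inp list" where
  "gate_inputs (And l r) = [l, r]"
| "gate_inputs (Or ls) = ls"

text \<open>Well-formed NNF on variable set X: gates only refer to earlier gates (acyclicity),
  all literals are on variables of X.\<close>
definition nnf_on :: "'v set \<Rightarrow> 'v circuit \<Rightarrow> bool" where
  "nnf_on X C \<longleftrightarrow>
     (\<forall>i<length (fst C). \<forall>u\<in>set (gate_inputs (fst C ! i)).
         (\<forall>j. u = Gate j \<longrightarrow> j < i) \<and> (\<forall>x b. u = Lit x b \<longrightarrow> x \<in> X))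
   \<and> (\<forall>j. snd C = Gate j \<longrightarrow> j < length (fst C))
   \<and> (\<forall>x b. snd C = Lit x b \<longrightarrow> x \<in> X)"

fun inp_val :: "bool list \<Rightarrow> ('v \<Rightarrow> bool) \<Rightarrow> 'v inp \<Rightarrow> bool" where
  "inp_val vs a (Lit x b) = (a x = b)"
| "inp_val vs a (Const b) = b"
| "inp_val vs a (Gate j) = (j < length vs \<and> vs ! j)"

fun gate_val :: "bool list \<Rightarrow> ('v \<Rightarrow> bool) \<Rightarrow> 'v gate \<Rightarrow> bool" where
  "gate_val vs a (And l r) = (inp_val vs a l \<and> inp_val vs a r)"
| "gate_val vs a (Or ls) = (\<exists>u\<in>set ls. inp_val vs a u)"

definition gate_vals :: "'v gate list \<Rightarrow> ('v \<Rightarrow> bool) \<Rightarrow> bool list" where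
  "gate_vals gs a = foldl (\<lambda>vs g. vs @ [gate_val vs a g]) [] gs"

definition eval_node :: "'v gate list \<Rightarrow> ('v \<Rightarrow> bool) \<Rightarrow> 'v inp \<Rightarrow> bool" where
  "eval_node gs a u = inp_val (gate_vals gs a) a u"

definition represents :: "'v circuit \<Rightarrow> (('v \<Rightarrow> bool) \<Rightarrow> bool) \<Rightarrow> bool" where
  "represents C f \<longleftrightarrow> (\<forall>a. eval_node (fst C) a (snd C) = f a)"

fun inp_vars :: "'v set list \<Rightarrow> 'v inp \<Rightarrow> 'v set" where
  "inp_vars vs (Lit x b) = {x}"
| "inp_vars vs (Const b) = {}"
| "inp_vars vs (Gate j) = (if j < length vs then vs ! j else {})"

definition gate_varsets :: "'v gate list \<Rightarrow> 'v set list" where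
  "gate_varsets gs = foldl (\<lambda>vs g. vs @ [\<Union>u\<in>set (gate_inputs g). inp_vars vs u]) [] gs"

definition node_vars :: "'v gate list \<Rightarrow> 'v inp \<Rightarrow> 'v set" where
  "node_vars gs u = inp_vars (gate_varsets gs) u"

definition decomposable :: "'v gate list \<Rightarrow> bool" where
  "decomposable gs \<longleftrightarrow>
     (\<forall>i<length gs. \<forall>l r. gs ! i = And l r \<longrightarrow> node_vars gs l \<inter> node_vars gs r = {})"

definition deterministic :: "'v gate list \<Rightarrow> bool" where
  "deterministic gs \<longleftrightarrow>
     (\<forall>i<length gs. \<forall>ls. gs ! i = Or ls \<longrightarrow>
        (\<forall>k<length ls. \<forall>k'<length ls. k \<noteq> k' \<longrightarrow>
            (\<forall>a. \<not> (eval_node gs a (ls ! k) \<and> eval_node gs a (ls ! k')))))"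

definition respects_vtree :: "'v gate list \<Rightarrow> 'v vtree \<Rightarrow> bool" where
  "respects_vtree gs T \<longleftrightarrow>
     (\<forall>i<length gs. \<forall>l r. gs ! i = And l r \<longrightarrow>
        (\<exists>vl vr. VNode vl vr \<in> subtrees T \<and>
                 node_vars gs l \<subseteq> set (leaves vl) \<and> node_vars gs r \<subseteq> set (leaves vr)))"

definition structured_dDNNF :: "'v set \<Rightarrow> 'v vtree \<Rightarrow> 'v circuit \<Rightarrow> bool" where
  "structured_dDNNF X T C \<longleftrightarrow>
     nnf_on X C \<and> decomposable (fst C) \<and> deterministic (fst C) \<and> respects_vtree (fst C) T"

definition is_partition :: "(('v \<Rightarrow> bool) \<Rightarrow> bool) list \<Rightarrow> bool" where
  "is_partition fs \<longleftrightarrow>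
     (\<forall>i<length fs. \<forall>j<length fs. i \<noteq> j \<longrightarrow> (\<forall>a. \<not> ((fs ! i) a \<and> (fs ! j) a)))
   \<and> (\<forall>i<length fs. \<exists>a. (fs ! i) a)
   \<and> (\<forall>a. \<exists>i<length fs. (fs ! i) a)"

fun and_inputs :: "'v gate list \<Rightarrow> 'v inp \<Rightarrow> ('v inp \<times> 'v inp) option" where
  "and_inputs gs (Gate i) =
     (if i < length gs then (case gs ! i of And p s \<Rightarrow> Some (p, s) | Or _ \<Rightarrow> None) else None)"
| "and_inputs gs (Lit x b) = None"
| "and_inputs gs (Const b) = None"

inductive sdd :: "'v vtree \<Rightarrow> 'v gate list \<Rightarrow> 'v inp \<Rightarrow> bool" where
  sdd_const: "sdd T gs (Const b)"
| sdd_lit: "x \<in> set (leaves T) \<Longrightarrow> sdd T gs (Lit x b)"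
| sdd_or: "\<lbrakk> j < length gs; gs ! j = Or ls; VNode vL vR \<in> subtrees T;
             \<forall>k<length ls. \<exists>p s. and_inputs gs (ls ! k) = Some (p, s) \<and> sdd vL gs p \<and> sdd vR gs s;
             is_partition (map (\<lambda>g. \<lambda>a. eval_node gs a (fst (the (and_inputs gs g)))) ls) \<rbrakk>
           \<Longrightarrow> sdd T gs (Gate j)"

definition is_SDD :: "'v set \<Rightarrow> 'v vtree \<Rightarrow> 'v circuit \<Rightarrow> bool" where
  "is_SDD X T C \<longleftrightarrow> nnf_on X C \<and> sdd T (fst C) (snd C)"

end

theory Submission
  imports Defs
begin


definition wf :: "'v gate list \<Rightarrow> bool" where
  "wf gs \<longleftrightarrow> (\<forall>i<length gs. \<forall>u\<in>set (gate_inputs (gs ! i)). \<forall>j. u = Gate j \<longrightarrow> j < i)"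

lemma nnf_wf: "nnf_on X C \<Longrightarrow> wf (fst C)"
  unfolding nnf_on_def wf_def by blast

lemma R_snoc: "foldl (\<lambda>vs g. vs @ [h vs g]) [] (gs @ [g]) = foldl (\<lambda>vs g. vs @ [h vs g]) [] gs @ [h (foldl (\<lambda>vs g. vs @ [h vs g]) [] gs) g]"
  by simp

lemma R_len: "length (foldl (\<lambda>vs g. vs @ [h vs g]) [] gs) = length gs"
  by (induction gs rule: rev_induct) auto

lemma R_nth: "i < length gs \<Longrightarrow> foldl (\<lambda>vs g. vs @ [h vs g]) [] gs ! i
   = h (take i (foldl (\<lambda>vs g. vs @ [h vs g]) [] gs)) (gs ! i)"
proof (induction gs arbitrary: i rule: rev_induct)
  case Nil then show ?case by simp
next
  case (snoc g gs)
  show ?case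
  proof (cases "i < length gs")
    case True
    then show ?thesis using snoc by (simp add: nth_append R_len)
  next
    case False
    then have "i = length gs" using snoc by simp
    then show ?thesis by (simp add: nth_append R_len)
  qed
qed

lemma inp_val_take: "(\<forall>j. u = Gate j \<longrightarrow> j < i) \<Longrightarrow> i \<le> length V \<Longrightarrow> inp_val (take i V) a u = inp_val V a u"
  by (cases u) auto

lemma inp_vars_take: "(\<forall>j. u = Gate j \<longrightarrow> j < i) \<Longrightarrow> i \<le> length V \<Longrightarrow> inp_vars (take i V) u = inp_vars V u"
  by (cases u) auto

lemma eval_gate:
  assumes "wf gs" "i < length gs"
  shows "eval_node gs a (Gate i) = (case gs ! i of And l r \<Rightarrow> eval_node gs a l \<and> eval_node gs a r
            | Or ls \<Rightarrow> (\<exists>u\<in>set ls. eval_node gs a u))"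
proof -
  let ?V = "gate_vals gs a"
  have len: "length ?V = length gs" unfolding gate_vals_def by (rule R_len)
  have nth: "?V ! i = gate_val (take i ?V) a (gs ! i)" unfolding gate_vals_def using assms(2) by (rule R_nth)
  have inps: "\<forall>u\<in>set (gate_inputs (gs ! i)). \<forall>j. u = Gate j \<longrightarrow> j < i" using assms unfolding wf_def by blast
  have "gate_val (take i ?V) a (gs ! i) = gate_val ?V a (gs ! i)"
    using inps assms(2) len by (cases "gs ! i") (auto simp: inp_val_take)
  then show ?thesis using nth len assms(2) by (cases "gs ! i") (auto simp: eval_node_def)
qed

lemma vars_gate:
  assumes "wf gs" "i < length gs"
  shows "node_vars gs (Gate i) = (\<Union>u\<in>set (gate_inputs (gs ! i)). node_vars gs u)"
proof -
  let ?V = "gate_varsets gs"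
  have len: "length ?V = length gs" unfolding gate_varsets_def by (rule R_len)
  have nth: "?V ! i = (\<Union>u\<in>set (gate_inputs (gs ! i)). inp_vars (take i ?V) u)" unfolding gate_varsets_def using assms(2) by (rule R_nth)
  have inps: "\<forall>u\<in>set (gate_inputs (gs ! i)). \<forall>j. u = Gate j \<longrightarrow> j < i" using assms unfolding wf_def by blast
  have "(\<Union>u\<in>set (gate_inputs (gs ! i)). inp_vars (take i ?V) u) = (\<Union>u\<in>set (gate_inputs (gs ! i)). inp_vars ?V u)"
    using inps assms(2) len by (auto simp: inp_vars_take)
  then show ?thesis using nth len assms(2) by (simp add: node_vars_def)
qed

lemma and_inputs_SomeD: "and_inputs gs u = Some (p, s) \<Longrightarrow> \<exists>i. u = Gate i \<and> i < length gs \<and> gs ! i = And p s"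
  by (cases u) (auto split: if_splits gate.splits)

lemma subtrees_leaves: "v \<in> subtrees T \<Longrightarrow> set (leaves v) \<subseteq> set (leaves T)"
  by (induction T) auto

lemma sdd_dep:
  assumes "sdd T gs u"
  shows "wf gs \<longrightarrow> (\<forall>a b. (\<forall>x\<in>set (leaves T). a x = b x) \<longrightarrow> eval_node gs a u = eval_node gs b u)"
  using assms
proof (induction rule: sdd.induct)
  case (sdd_const T gs b) then show ?case by (simp add: eval_node_def)
next
  case (sdd_lit x T gs b') then show ?case by (simp add: eval_node_def)
next
  case (sdd_or j gs ls vL vR T)
  have sub: "set (leaves vL) \<subseteq> set (leaves T)" "set (leaves vR) \<subseteq> set (leaves T)"
    using subtrees_leaves[OF sdd_or.hyps(3)] by auto
  show ?case
  proof (intro impI allI)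
    fix a b :: "_ \<Rightarrow> bool"
    assume wf: "wf gs" and ag: "\<forall>x\<in>set (leaves T). a x = b x"
    have "eval_node gs a u = eval_node gs b u" if "u \<in> set ls" for u
    proof -
      obtain k where k: "k < length ls" "u = ls ! k" using \<open>u \<in> set ls\<close> by (auto simp: in_set_conv_nth)
      obtain p s where ps: "and_inputs gs u = Some (p, s)" "wf gs \<longrightarrow> (\<forall>a b. (\<forall>x\<in>set (leaves vL). a x = b x) \<longrightarrow> eval_node gs a p = eval_node gs b p)"
         "wf gs \<longrightarrow> (\<forall>a b. (\<forall>x\<in>set (leaves vR). a x = b x) \<longrightarrow> eval_node gs a s = eval_node gs b s)"
        using sdd_or.IH k by blast
      obtain i where i: "u = Gate i" "i < length gs" "gs ! i = And p s" using and_inputs_SomeD[OF ps(1)] by blast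
      have "eval_node gs a p = eval_node gs b p" using ps(2) wf ag sub by blast
      moreover have "eval_node gs a s = eval_node gs b s" using ps(3) wf ag sub by blast
      ultimately show ?thesis using i eval_gate[OF wf i(2)] by simp
    qed
    then show "eval_node gs a (Gate j) = eval_node gs b (Gate j)"
      using eval_gate[OF wf sdd_or.hyps(1)] sdd_or.hyps(2) by simp
  qed
qed



function rlt :: "nat \<Rightarrow> nat \<Rightarrow> nat vtree" where
  "rlt a b = (if a < b then VNode (VLeaf a) (rlt (Suc a) b) else VLeaf a)"
  by auto
termination by (relation "measure (\<lambda>(a,b). b - a)") auto

declare rlt.simps[simp del]

lemma rlt_leaves: "a \<le> b \<Longrightarrow> leaves (rlt a b) = [a..<Suc b]"
proof (induction a b rule: rlt.induct)
  case (1 a b)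
  show ?case
  proof (cases "a < b")
    case True
    then show ?thesis using 1 by (simp add: rlt.simps upt_rec)
  next
    case False
    then show ?thesis using 1 by (simp add: rlt.simps)
  qed
qed

lemma rlt_sub: "a \<le> c \<Longrightarrow> c \<le> b \<Longrightarrow> rlt c b \<in> subtrees (rlt a b)"
proof (induction a b rule: rlt.induct)
  case (1 a b)
  show ?case
  proof (cases "a = c")
    case True
    then show ?thesis by (cases "rlt c b") (auto)
  next
    case False
    then have "a < b" using 1 by simp
    then show ?thesis using 1 False by (subst rlt.simps) auto
  qed
qed

lemma rlt_node: "c < b \<Longrightarrow> rlt c b = VNode (VLeaf c) (rlt (Suc c) b)"
  by (simp add: rlt.simps)

definition Tm :: "nat \<Rightarrow> nat vtree" where
  "Tm m = VNode (rlt 1 m) (rlt (m+1) (2*m))"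

definition fm :: "nat \<Rightarrow> (nat \<Rightarrow> bool) \<Rightarrow> bool" where
  "fm m a = (\<exists>t<m. a (m-t) \<and> a (2*m-t) \<and> (\<forall>k. 2*m-t < k \<and> k \<le> 2*m \<longrightarrow> \<not> a k))"

definition gg :: "nat \<Rightarrow> nat \<Rightarrow> nat gate" where
  "gg m i = (if i < m then (if i = 0 then Or [Lit (2*m) False] else And (Lit (2*m-i) False) (Gate (i-1)))
    else if i < 2*m then (if i = m then Or [Lit (2*m) True] else And (Lit (3*m-i) True) (Gate (i-m-1)))
    else if i < 3*m then And (Lit (3*m-i) True) (Gate (i - m))
    else if i < 4*m then And (Lit (4*m-i) False) (Gate (i - 2*m))
    else if i = 4*m then Or (map (\<lambda>t. Gate (2*m+t)) [0..<m])
    else Or (map (\<lambda>t. Gate (3*m+t)) [0..<m] @ [Gate (m-1)]))"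

definition gsm :: "nat \<Rightarrow> nat gate list" where
  "gsm m = map (gg m) [0..<4*m+2]"

lemma gsm_len[simp]: "length (gsm m) = 4*m+2" by (simp add: gsm_def)
lemma gsm_nth[simp]: "i < 4*m+2 \<Longrightarrow> gsm m ! i = gg m i" unfolding gsm_def by (metis add_0 diff_zero nth_map_upt)

lemma gsm_wf: "m \<ge> 1 \<Longrightarrow> wf (gsm m)"
  unfolding wf_def
proof (intro allI impI ballI)
  fix i u j assume m: "m \<ge> 1" and i: "i < length (gsm m)" and u: "u \<in> set (gate_inputs (gsm m ! i))" and uj: "u = Gate j"
  have g: "gsm m ! i = gg m i" using i by simp
  show "j < i"
  proof (cases "i < 4*m")
    case True
    then show ?thesis using u uj g by (auto simp: gg_def split: if_split_asm)
  next
    case False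
    then have "i = 4*m \<or> i = 4*m+1" using i by auto
    then show ?thesis using u uj g m by (auto simp: gg_def)
  qed
qed

lemma S_sem: assumes "m \<ge> 1" shows "t < m \<Longrightarrow> eval_node (gsm m) a (Gate t) = (\<forall>k. 2*m-t \<le> k \<and> k \<le> 2*m \<longrightarrow> \<not> a k)"
proof (induction t)
  case 0
  have "eval_node (gsm m) a (Gate 0) = (\<not> a (2*m))"
    using eval_gate[OF gsm_wf[OF assms], of 0] assms by (simp add: gg_def eval_node_def)
  then show ?case by auto
next
  case (Suc t)
  have "gsm m ! Suc t = And (Lit (2*m - Suc t) False) (Gate t)" using Suc.prems by (simp add: gg_def)
  then have "eval_node (gsm m) a (Gate (Suc t)) = (\<not> a (2*m - Suc t) \<and> eval_node (gsm m) a (Gate t))"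
    using eval_gate[OF gsm_wf[OF assms], of "Suc t"] Suc.prems by (simp add: eval_node_def)
  also have "\<dots> = (\<forall>k. 2*m-Suc t \<le> k \<and> k \<le> 2*m \<longrightarrow> \<not> a k)"
  proof -
    have e: "\<And>k. (2*m - Suc t \<le> k) = (k = 2*m - Suc t \<or> 2*m - t \<le> k)" using Suc.prems by arith
    show ?thesis using Suc by (auto simp: e)
  qed
  finally show ?case .
qed


definition Bt :: "nat \<Rightarrow> (nat \<Rightarrow> bool) \<Rightarrow> nat \<Rightarrow> bool" where
  "Bt m a t = (a (2*m-t) \<and> (\<forall>k. 2*m-t < k \<and> k \<le> 2*m \<longrightarrow> \<not> a k))"

lemma B_sem: assumes "m \<ge> 1" "t < m" shows "eval_node (gsm m) a (Gate (m+t)) = Bt m a t"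
proof (cases "t = 0")
  case True
  have "eval_node (gsm m) a (Gate (m+t)) = a (2*m)"
    using eval_gate[OF gsm_wf[OF assms(1)], of "m+t"] assms True by (simp add: gg_def eval_node_def)
  then show ?thesis using True by (auto simp: Bt_def)
next
  case False
  have "gsm m ! (m+t) = And (Lit (2*m - t) True) (Gate (t-1))" using assms False by (simp add: gg_def)
  then have "eval_node (gsm m) a (Gate (m+t)) = (a (2*m - t) \<and> eval_node (gsm m) a (Gate (t-1)))"
    using eval_gate[OF gsm_wf[OF assms(1)], of "m+t"] assms by (simp add: eval_node_def)
  also have "\<dots> = Bt m a t" using S_sem[OF assms(1), of "t-1" a] assms False unfolding Bt_def
  proof -
    have e: "\<And>k. (2*m-(t - Suc 0) \<le> k) = (2*m-t < k)" using assms False by arith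
    show "(a (2 * m - t) \<and> eval_node (gsm m) a (Gate (t - 1))) =
    (a (2 * m - t) \<and> (\<forall>k. 2 * m - t < k \<and> k \<le> 2 * m \<longrightarrow> \<not> a k))"
      using S_sem[OF assms(1), of "t-1" a] assms by (simp add: e)
  qed
  finally show ?thesis .
qed

lemma P_sem: assumes "m \<ge> 1" "t < m" shows "eval_node (gsm m) a (Gate (2*m+t)) = (a (m-t) \<and> Bt m a t)"
proof -
  have "gsm m ! (2*m+t) = And (Lit (m - t) True) (Gate (m+t))" using assms by (simp add: gg_def)
  then show ?thesis using eval_gate[OF gsm_wf[OF assms(1)], of "2*m+t"] assms B_sem[OF assms]
    by (simp add: eval_node_def)
qed

lemma Q_sem: assumes "m \<ge> 1" "t < m" shows "eval_node (gsm m) a (Gate (3*m+t)) = (\<not> a (m-t) \<and> Bt m a t)"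
proof -
  have "gsm m ! (3*m+t) = And (Lit (m - t) False) (Gate (m+t))" using assms by (simp add: gg_def)
  then show ?thesis using eval_gate[OF gsm_wf[OF assms(1)], of "3*m+t"] assms B_sem[OF assms]
    by (simp add: eval_node_def)
qed

lemma fm_Bt: "fm m a = (\<exists>t<m. a (m-t) \<and> Bt m a t)"
  by (auto simp: fm_def Bt_def)

lemma Bt_unique: "Bt m a t \<Longrightarrow> Bt m a t' \<Longrightarrow> t < m \<Longrightarrow> t' < m \<Longrightarrow> t = t'"
proof (rule ccontr)
  assume h: "Bt m a t" "Bt m a t'" "t < m" "t' < m" "t \<noteq> t'"
  show False
  proof (cases "t < t'")
    case True
    have "2*m - t' < 2*m - t" "2*m-t \<le> 2*m" using True h by arith+
    then show False using h unfolding Bt_def by blast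
  next
    case False
    then have "t' < t" using h by arith
    then have "2*m - t < 2*m - t'" "2*m-t' \<le> 2*m" using h by arith+
    then show False using h unfolding Bt_def by blast
  qed
qed

lemma Bt_exists: assumes "\<not> (\<forall>k. m+1 \<le> k \<and> k \<le> 2*m \<longrightarrow> \<not> a k)" shows "\<exists>t<m. Bt m a t"
proof -
  let ?K = "{k. m+1 \<le> k \<and> k \<le> 2*m \<and> a k}"
  have fin: "finite ?K" by (rule finite_subset[of _ "{..2*m}"]) auto
  have ne: "?K \<noteq> {}" using assms by auto
  define K where "K = Max ?K"
  have K: "K \<in> ?K" unfolding K_def using Max_in[OF fin ne] .
  have Kmax: "\<And>k. k \<in> ?K \<Longrightarrow> k \<le> K" unfolding K_def using Max_ge[OF fin] by blast
  have "Bt m a (2*m - K)"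
    unfolding Bt_def
  proof
    have "2*m - (2*m-K) = K" using K by auto
    then show "a (2*m - (2*m-K))" using K by simp
    show "\<forall>k. 2 * m - (2 * m - K) < k \<and> k \<le> 2 * m \<longrightarrow> \<not> a k"
    proof (intro allI impI)
      fix k assume k: "2 * m - (2 * m - K) < k \<and> k \<le> 2 * m"
      then have "K < k" "m+1 \<le> k" using K by auto
      then show "\<not> a k" using Kmax[of k] k by auto
    qed
  qed
  moreover have "2*m - K < m" using K by auto
  ultimately show ?thesis by blast
qed

lemma S_last: assumes "m \<ge> 1" shows "eval_node (gsm m) a (Gate (m-1)) = (\<forall>k. m+1 \<le> k \<and> k \<le> 2*m \<longrightarrow> \<not> a k)"
  using S_sem[OF assms, of "m-1" a] assms by (simp add: Suc_diff_le)

lemma pos_sem: assumes "m \<ge> 1" shows "eval_node (gsm m) a (Gate (4*m)) = fm m a"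
proof -
  have "gsm m ! (4*m) = Or (map (\<lambda>t. Gate (2*m+t)) [0..<m])" by (simp add: gg_def)
  then have "eval_node (gsm m) a (Gate (4*m)) = (\<exists>t<m. eval_node (gsm m) a (Gate (2*m+t)))"
    using eval_gate[OF gsm_wf[OF assms], of "4*m"] by auto
  then show ?thesis using P_sem[OF assms] fm_Bt by auto
qed

lemma neg_sem: assumes "m \<ge> 1" shows "eval_node (gsm m) a (Gate (4*m+1)) = (\<not> fm m a)"
proof -
  have "gsm m ! (4*m+1) = Or (map (\<lambda>t. Gate (3*m+t)) [0..<m] @ [Gate (m-1)])" by (simp add: gg_def)
  then have "eval_node (gsm m) a (Gate (4*m+1)) = ((\<exists>t<m. eval_node (gsm m) a (Gate (3*m+t))) \<or> eval_node (gsm m) a (Gate (m-1)))"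
    using eval_gate[OF gsm_wf[OF assms], of "4*m+1"] by auto
  also have "\<dots> = ((\<exists>t<m. \<not> a (m-t) \<and> Bt m a t) \<or> (\<forall>k. m+1 \<le> k \<and> k \<le> 2*m \<longrightarrow> \<not> a k))"
    using Q_sem[OF assms] S_last[OF assms] by auto
  also have "\<dots> = (\<not> fm m a)"
  proof
    assume "(\<exists>t<m. \<not> a (m-t) \<and> Bt m a t) \<or> (\<forall>k. m+1 \<le> k \<and> k \<le> 2*m \<longrightarrow> \<not> a k)"
    then show "\<not> fm m a"
    proof
      assume "\<exists>t<m. \<not> a (m-t) \<and> Bt m a t"
      then show ?thesis unfolding fm_Bt using Bt_unique by blast
    next
      assume z: "\<forall>k. m+1 \<le> k \<and> k \<le> 2*m \<longrightarrow> \<not> a k"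
      show ?thesis unfolding fm_Bt Bt_def
      proof clarify
        fix t assume "t < m" "a (2*m-t)"
        moreover have "m+1 \<le> 2*m-t" "2*m-t \<le> 2*m" using \<open>t < m\<close> by arith+
        ultimately show False using z by blast
      qed
    qed
  next
    assume nf: "\<not> fm m a"
    show "(\<exists>t<m. \<not> a (m-t) \<and> Bt m a t) \<or> (\<forall>k. m+1 \<le> k \<and> k \<le> 2*m \<longrightarrow> \<not> a k)"
    proof (cases "\<forall>k. m+1 \<le> k \<and> k \<le> 2*m \<longrightarrow> \<not> a k")
      case False
      then obtain t where "t < m" "Bt m a t" using Bt_exists by blast
      then show ?thesis using nf unfolding fm_Bt by blast
    qed simp
  qed
  finally show ?thesis .
qed


lemma vars_lit[simp]: "node_vars gs (Lit x b) = {x}" by (simp add: node_vars_def)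

lemma vars_S: assumes "m \<ge> 1" shows "t < m \<Longrightarrow> node_vars (gsm m) (Gate t) \<subseteq> {2*m-t..2*m}"
proof (induction t)
  case 0
  then show ?case using vars_gate[OF gsm_wf[OF assms], of 0] assms by (simp add: gg_def)
next
  case (Suc t)
  have "gsm m ! Suc t = And (Lit (2*m - Suc t) False) (Gate t)" using Suc.prems by (simp add: gg_def)
  then have "node_vars (gsm m) (Gate (Suc t)) = insert (2*m - Suc t) (node_vars (gsm m) (Gate t))"
    using vars_gate[OF gsm_wf[OF assms], of "Suc t"] Suc.prems by simp
  then show ?case using Suc by (auto simp: subset_iff)
qed

lemma vars_S': "x \<in> node_vars (gsm m) (Gate t) \<Longrightarrow> m \<ge> 1 \<Longrightarrow> t < m \<Longrightarrow> 2*m-t \<le> x \<and> x \<le> 2*m"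
  using vars_S[of m t] by auto

lemma vars_B: assumes "m \<ge> 1" "t < m" shows "node_vars (gsm m) (Gate (m+t)) \<subseteq> {2*m-t..2*m}"
proof (cases "t = 0")
  case True
  then show ?thesis using vars_gate[OF gsm_wf[OF assms(1)], of "m+t"] assms by (simp add: gg_def)
next
  case False
  have "gsm m ! (m+t) = And (Lit (2*m - t) True) (Gate (t-1))" using assms False by (simp add: gg_def)
  then have "node_vars (gsm m) (Gate (m+t)) = insert (2*m - t) (node_vars (gsm m) (Gate (t-1)))"
    using vars_gate[OF gsm_wf[OF assms(1)], of "m+t"] assms by simp
  then show ?thesis using assms False by (auto dest!: vars_S')
qed

lemma vars_B': "x \<in> node_vars (gsm m) (Gate (m+t)) \<Longrightarrow> m \<ge> 1 \<Longrightarrow> t < m \<Longrightarrow> 2*m-t \<le> x \<and> x \<le> 2*m"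
  using vars_B[of m t] by auto

lemma Tm_sub: assumes "m \<ge> 1" "1 \<le> t" "t < m" shows "VNode (VLeaf (2*m-t)) (rlt (2*m-t+1) (2*m)) \<in> subtrees (Tm m)"
proof -
  have "rlt (2*m-t) (2*m) \<in> subtrees (rlt (m+1) (2*m))" using assms by (intro rlt_sub) auto
  moreover have "rlt (2*m-t) (2*m) = VNode (VLeaf (2*m-t)) (rlt (2*m-t+1) (2*m))"
    using assms by (simp add: rlt_node)
  ultimately show ?thesis by (simp add: Tm_def)
qed

lemma leaves_tail: assumes "1 \<le> t" "t < m" shows "set (leaves (rlt (2*m-t+1) (2*m))) = {2*m-t+1..2*m}"
  using assms by (subst rlt_leaves) auto

lemma leaves_Y: "m \<ge> 1 \<Longrightarrow> set (leaves (rlt 1 m)) = {1..m}" by (subst rlt_leaves) auto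
lemma leaves_Z: "m \<ge> 1 \<Longrightarrow> set (leaves (rlt (m+1) (2*m))) = {m+1..2*m}" by (subst rlt_leaves) auto

lemma gsm_decomp: assumes "m \<ge> 1" shows "decomposable (gsm m)"
  unfolding decomposable_def
proof (intro allI impI)
  fix i l r assume i: "i < length (gsm m)" and g: "gsm m ! i = And l r"
  have gi: "gg m i = And l r" using i g by simp
  consider "0 < i \<and> i < m" | "m < i \<and> i < 2*m" | "2*m \<le> i \<and> i < 3*m" | "3*m \<le> i \<and> i < 4*m"
    using gi i by (auto simp: gg_def split: if_split_asm)
  then show "node_vars (gsm m) l \<inter> node_vars (gsm m) r = {}"
  proof cases
    case 1
    then have "l = Lit (2*m-i) False" "r = Gate (i-1)" using gi by (auto simp: gg_def)
    then show ?thesis using 1 assms by (auto dest!: vars_S')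
  next
    case 2
    then have "l = Lit (3*m-i) True" "r = Gate (i-m-1)" using gi by (auto simp: gg_def)
    then show ?thesis using 2 assms by (auto dest!: vars_S')
  next
    case 3
    then have "l = Lit (3*m-i) True" "r = Gate (m + (i-2*m))" using gi by (auto simp: gg_def)
    moreover have "node_vars (gsm m) (Gate (m + (i-2*m))) \<subseteq> {2*m-(i-2*m)..2*m}" by (rule vars_B[OF assms]) (use 3 in arith)
    ultimately show ?thesis using 3 by (auto simp: subset_iff)
  next
    case 4
    then have "l = Lit (4*m-i) False" "r = Gate (m + (i-3*m))" using gi by (auto simp: gg_def)
    moreover have "node_vars (gsm m) (Gate (m + (i-3*m))) \<subseteq> {2*m-(i-3*m)..2*m}" by (rule vars_B[OF assms]) (use 4 in arith)
    ultimately show ?thesis using 4 by (auto simp: subset_iff)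
  qed
qed

lemma gsm_resp: assumes "m \<ge> 1" shows "respects_vtree (gsm m) (Tm m)"
  unfolding respects_vtree_def
proof (intro allI impI)
  fix i l r assume i: "i < length (gsm m)" and g: "gsm m ! i = And l r"
  have gi: "gg m i = And l r" using i g by simp
  have root: "VNode (rlt 1 m) (rlt (m+1) (2*m)) \<in> subtrees (Tm m)" by (simp add: Tm_def)
  consider "0 < i \<and> i < m" | "m < i \<and> i < 2*m" | "2*m \<le> i \<and> i < 3*m" | "3*m \<le> i \<and> i < 4*m"
    using gi i by (auto simp: gg_def split: if_split_asm)
  then show "\<exists>vl vr. VNode vl vr \<in> subtrees (Tm m) \<and> node_vars (gsm m) l \<subseteq> set (leaves vl) \<and> node_vars (gsm m) r \<subseteq> set (leaves vr)"
  proof cases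
    case 1
    then have "l = Lit (2*m-i) False" "r = Gate (i-1)" using gi by (auto simp: gg_def)
    moreover have "node_vars (gsm m) (Gate (i-1)) \<subseteq> {2*m-i+1..2*m}" using 1 assms by (auto dest!: vars_S')
    ultimately show ?thesis using Tm_sub[OF assms, of i] leaves_tail[of i m] 1
      by (intro exI[of _ "VLeaf (2*m-i)"] exI[of _ "rlt (2*m-i+1) (2*m)"]) auto
  next
    case 2
    then have "l = Lit (2*m-(i-m)) True" "r = Gate ((i-m)-1)" using gi by (auto simp: gg_def)
    moreover have "node_vars (gsm m) (Gate (i-m-1)) \<subseteq> {2*m-(i-m)+1..2*m}" using 2 assms by (auto dest!: vars_S')
    ultimately show ?thesis using Tm_sub[OF assms, of "i-m"] leaves_tail[of "i-m" m] 2
      by (intro exI[of _ "VLeaf (2*m-(i-m))"] exI[of _ "rlt (2*m-(i-m)+1) (2*m)"]) auto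
  next
    case 3
    then have "l = Lit (3*m-i) True" "r = Gate (m + (i-2*m))" using gi by (auto simp: gg_def)
    moreover have "node_vars (gsm m) (Gate (m + (i-2*m))) \<subseteq> {2*m-(i-2*m)..2*m}" by (rule vars_B[OF assms]) (use 3 in arith)
    ultimately show ?thesis using 3 assms root leaves_Y[OF assms] leaves_Z[OF assms]
      by (intro exI[of _ "rlt 1 m"] exI[of _ "rlt (m+1) (2*m)"]) (auto simp: subset_iff)
  next
    case 4
    then have "l = Lit (4*m-i) False" "r = Gate (m + (i-3*m))" using gi by (auto simp: gg_def)
    moreover have "node_vars (gsm m) (Gate (m + (i-3*m))) \<subseteq> {2*m-(i-3*m)..2*m}" by (rule vars_B[OF assms]) (use 4 in arith)
    ultimately show ?thesis using 4 assms root leaves_Y[OF assms] leaves_Z[OF assms]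
      by (intro exI[of _ "rlt 1 m"] exI[of _ "rlt (m+1) (2*m)"]) (auto simp: subset_iff)
  qed
qed


lemma gsm_det: assumes "m \<ge> 1" shows "deterministic (gsm m)"
  unfolding deterministic_def
proof (intro allI impI)
  fix i ls k k' a assume i: "i < length (gsm m)" and g: "gsm m ! i = Or ls" and k: "k < length ls" "k' < length ls" "k \<noteq> k'"
  have gi: "gg m i = Or ls" using i g by simp
  consider "i = 0" | "i = m" | "i = 4*m" | "i = 4*m+1"
    using gi i by (auto simp: gg_def split: if_split_asm)
  then show "\<not> (eval_node (gsm m) a (ls ! k) \<and> eval_node (gsm m) a (ls ! k'))"
  proof cases
    case 1 then show ?thesis using gi k assms by (auto simp: gg_def)
  next
    case 2 then show ?thesis using gi k assms by (auto simp: gg_def)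
  next
    case 3
    then have ls: "ls = map (\<lambda>t. Gate (2*m+t)) [0..<m]" using gi assms by (auto simp: gg_def)
    then show ?thesis using k P_sem[OF assms] Bt_unique by auto
  next
    case 4
    then have ls: "ls = map (\<lambda>t. Gate (3*m+t)) [0..<m] @ [Gate (m-1)]" using gi assms by (auto simp: gg_def)
    have ev: "eval_node (gsm m) a (ls ! j) = (if j < m then \<not> a (m-j) \<and> Bt m a j else (\<forall>k. m+1 \<le> k \<and> k \<le> 2*m \<longrightarrow> \<not> a k))"
      if "j < length ls" for j
    proof (cases "j < m")
      case True
      then show ?thesis using ls Q_sem[OF assms] by (simp add: nth_append)
    next
      case False
      then have "j = m" using that ls by simp
      then show ?thesis using ls S_last[OF assms] by (simp add: nth_append)
    qed
    have notboth: False if "Bt m a j" "j < m" "\<forall>k. m+1 \<le> k \<and> k \<le> 2*m \<longrightarrow> \<not> a k" for j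
    proof -
      have "m+1 \<le> 2*m-j" "2*m-j \<le> 2*m" using \<open>j < m\<close> by arith+
      then show False using that unfolding Bt_def by blast
    qed
    show ?thesis
    proof
      assume both: "eval_node (gsm m) a (ls ! k) \<and> eval_node (gsm m) a (ls ! k')"
      have lsl: "length ls = m+1" using ls by simp
      show False
      proof (cases "k < m")
        case True
        note kk = this
        show False
        proof (cases "k' < m")
          case True
          then show False using kk both ev[OF k(1)] ev[OF k(2)] Bt_unique[of m a k k'] k(3) by simp
        next
          case False
          then show False using kk both ev[OF k(1)] ev[OF k(2)] notboth[of k] by simp
        qed
      next
        case False
        then have "k' < m" using k lsl by arith
        then show False using False both ev[OF k(1)] ev[OF k(2)] notboth[of k'] by simp
      qed
    qed
  qed
qed

lemma gsm_nnf: assumes "m \<ge> 1" "oo = 4*m \<or> oo = 4*m+1" shows "nnf_on {1..2*m} (gsm m, Gate oo)"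
  unfolding nnf_on_def
proof (intro conjI allI impI ballI)
  show "\<And>i u j. i < length (fst (gsm m, Gate oo)) \<Longrightarrow> u \<in> set (gate_inputs (fst (gsm m, Gate oo) ! i)) \<Longrightarrow> u = Gate j \<Longrightarrow> j < i"
    using gsm_wf[OF assms(1)] unfolding wf_def by auto
  fix i u x b assume i: "i < length (fst (gsm m, Gate oo))" and u: "u \<in> set (gate_inputs (fst (gsm m, Gate oo) ! i))" and ux: "u = Lit x b"
  have g: "gsm m ! i = gg m i" using i by simp
  show "x \<in> {1..2*m}"
  proof (cases "i < 4*m")
    case True
    then show ?thesis using u ux g i by (auto simp: gg_def split: if_split_asm)
  next
    case False
    then have "i = 4*m \<or> i = 4*m+1" using i by auto
    then show ?thesis using u ux g by (auto simp: gg_def)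
  qed
qed (use assms in auto)

lemma Tm_for: assumes "m \<ge> 1" shows "vtree_for (Tm m) {1..2*m}"
  unfolding vtree_for_def Tm_def using assms by (simp add: rlt_leaves) auto



lemma fm_a1: "m \<ge> 1 \<Longrightarrow> fm m (\<lambda>x. True)" unfolding fm_def by (rule exI[of _ 0]) auto
lemma fm_a2: "\<not> fm m (\<lambda>x. x \<le> m)" unfolding fm_def by auto
lemma fm_a3: "\<not> fm m (\<lambda>x. m < x)" unfolding fm_def by auto

lemma fm_notdep:
  assumes m: "m \<ge> 1" and dep: "\<forall>a b. (\<forall>x\<in>W. a x = b x) \<longrightarrow> fm m a = fm m b"
    and W: "W \<subseteq> {1..m} \<or> W \<subseteq> {m+1..2*m}"
  shows False
  using W
proof
  assume w: "W \<subseteq> {1..m}"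
  have "fm m (\<lambda>x. True) = fm m (\<lambda>x. x \<le> m)" by (rule dep[rule_format]) (use w in auto)
  then show False using fm_a1[OF m] fm_a2[of m] by simp
next
  assume w: "W \<subseteq> {m+1..2*m}"
  have "fm m (\<lambda>x. True) = fm m (\<lambda>x. m < x)" by (rule dep[rule_format]) (use w in auto)
  then show False using fm_a1[OF m] fm_a3[of m] by simp
qed

lemma subtrees_Tm: "subtrees (Tm m) = insert (Tm m) (subtrees (rlt 1 m) \<union> subtrees (rlt (m+1) (2*m)))"
  by (simp add: Tm_def)

lemma fm_b_true: assumes "S \<subseteq> {1..m}" "d \<in> S" shows "fm m (\<lambda>x. x \<in> S \<or> x = m+d)"
proof -
  have d: "1 \<le> d" "d \<le> m" using assms by auto
  show ?thesis unfolding fm_def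
  proof (intro exI[of _ "m-d"] conjI allI impI)
    show "m - d < m" using d by arith
    show "m - (m-d) \<in> S \<or> m - (m-d) = m+d" using d assms by auto
    show "2*m - (m-d) \<in> S \<or> 2*m - (m-d) = m+d" using d by auto
    fix k assume "2 * m - (m - d) < k \<and> k \<le> 2 * m"
    then show "\<not> (k \<in> S \<or> k = m + d)" using d assms by auto
  qed
qed

lemma fm_b_false: assumes "S \<subseteq> {1..m}" "d \<notin> S" "1 \<le> d" "d \<le> m" shows "\<not> fm m (\<lambda>x. x \<in> S \<or> x = m+d)"
proof
  assume "fm m (\<lambda>x. x \<in> S \<or> x = m+d)"
  then obtain t where t: "t < m" "m-t \<in> S \<or> m-t = m+d" "2*m-t \<in> S \<or> 2*m-t = m+d"
    unfolding fm_def by blast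
  have "2*m - t \<notin> {1..m}" using t(1) by auto
  then have "2*m - t \<notin> S" using assms(1) by blast
  then have "2*m - t = m+d" using t by blast
  then have "m - t = d" using t(1) by arith
  then show False using t(2) assms by auto
qed

lemma lower:
  assumes m: "m \<ge> 1" and sd: "is_SDD {1..2*m} (Tm m) C" and rep: "represents C (fm m)"
  shows "2^m \<le> csize C"
proof -
  obtain gs u where C: "C = (gs, u)" by (cases C)
  have wf: "wf gs" using nnf_wf sd C unfolding is_SDD_def by fastforce
  have sdd: "sdd (Tm m) gs u" using sd C unfolding is_SDD_def by simp
  have ev: "\<And>a. eval_node gs a u = fm m a" using rep C unfolding represents_def by simp
  have lvT: "set (leaves (Tm m)) = {1..2*m}" using Tm_for[OF m] unfolding vtree_for_def by simp
  from sdd show ?thesis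
  proof cases
    case (sdd_const b)
    have evc: "\<And>a. fm m a = b" using ev sdd_const by (simp add: eval_node_def)
    have "\<forall>a c. (\<forall>x\<in>{}. a x = c x) \<longrightarrow> fm m a = fm m c" using evc by simp
    then show ?thesis using fm_notdep[OF m] by blast
  next
    case (sdd_lit x b)
    have evl: "\<And>a. fm m a = (a x = b)" using ev sdd_lit by (simp add: eval_node_def)
    have "\<forall>a c. (\<forall>x'\<in>{x}. a x' = c x') \<longrightarrow> fm m a = fm m c" using evl by simp
    moreover have "{x} \<subseteq> {1..m} \<or> {x} \<subseteq> {m+1..2*m}" using sdd_lit lvT by auto
    ultimately show ?thesis using fm_notdep[OF m] by blast
  next
    case (sdd_or j ls vL vR)
    define P where "P k a = eval_node gs a (fst (the (and_inputs gs (ls ! k))))" for k a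
    define Sb where "Sb k a = eval_node gs a (snd (the (and_inputs gs (ls ! k))))" for k a
    have ps: "\<And>k. k < length ls \<Longrightarrow> \<exists>p s. and_inputs gs (ls ! k) = Some (p, s) \<and> sdd vL gs p \<and> sdd vR gs s"
      using sdd_or(5) by blast
    have evk: "eval_node gs a (ls ! k) = (P k a \<and> Sb k a)" if kl: "k < length ls" for k a
    proof -
      obtain p s where p: "and_inputs gs (ls ! k) = Some (p, s)" using ps[OF kl] by blast
      obtain i where i: "ls ! k = Gate i" "i < length gs" "gs ! i = And p s" using and_inputs_SomeD[OF p] by blast
      show ?thesis using eval_gate[OF wf i(2)] i p unfolding P_def Sb_def by simp
    qed
    have evj: "fm m a = (\<exists>k<length ls. P k a \<and> Sb k a)" for a
    proof -
      have "fm m a = eval_node gs a u" using ev by simp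
      also have "\<dots> = (\<exists>v\<in>set ls. eval_node gs a v)"
        using eval_gate[OF wf sdd_or(2)] sdd_or(1,3) by simp
      also have "\<dots> = (\<exists>k<length ls. eval_node gs a (ls ! k))" by (metis in_set_conv_nth)
      also have "\<dots> = (\<exists>k<length ls. P k a \<and> Sb k a)" using evk by auto
      finally show ?thesis .
    qed
    have Pdep: "P k a = P k b" if kl: "k < length ls" and ag: "\<forall>x\<in>set (leaves vL). a x = b x" for k a b
    proof -
      obtain p s where p: "and_inputs gs (ls ! k) = Some (p, s)" "sdd vL gs p" using ps[OF kl] by blast
      show ?thesis using sdd_dep[OF p(2)] wf ag p(1) unfolding P_def by simp
    qed
    have Sdep: "Sb k a = Sb k b" if kl: "k < length ls" and ag: "\<forall>x\<in>set (leaves vR). a x = b x" for k a b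
    proof -
      obtain p s where p: "and_inputs gs (ls ! k) = Some (p, s)" "sdd vR gs s" using ps[OF kl] by blast
      show ?thesis using sdd_dep[OF p(2)] wf ag p(1) unfolding Sb_def by simp
    qed
    have fdep: "\<forall>a b. (\<forall>x\<in>set (leaves vL) \<union> set (leaves vR). a x = b x) \<longrightarrow> fm m a = fm m b"
    proof (intro allI impI)
      fix a b :: "nat \<Rightarrow> bool" assume ag: "\<forall>x\<in>set (leaves vL) \<union> set (leaves vR). a x = b x"
      have agL: "\<forall>x\<in>set (leaves vL). a x = b x" using ag by simp
      have agR: "\<forall>x\<in>set (leaves vR). a x = b x" using ag by simp
      have PP: "P k a = P k b" if "k < length ls" for k using Pdep[OF that agL] .
      have SS: "Sb k a = Sb k b" if "k < length ls" for k using Sdep[OF that agR] .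
      have "(\<exists>k<length ls. P k a \<and> Sb k a) = (\<exists>k<length ls. P k b \<and> Sb k b)"
        using PP SS by auto
      then show "fm m a = fm m b" using evj[of a] evj[of b] by simp
    qed
    have node: "vL = rlt 1 m \<and> vR = rlt (m+1) (2*m)"
    proof -
      have "VNode vL vR \<in> insert (Tm m) (subtrees (rlt 1 m) \<union> subtrees (rlt (m+1) (2*m)))"
        using sdd_or(4) unfolding subtrees_Tm .
      moreover
      { assume "VNode vL vR \<in> subtrees (rlt 1 m)"
        then have "set (leaves (VNode vL vR)) \<subseteq> {1..m}"
          using subtrees_leaves leaves_Y[OF m] by metis
        then have "set (leaves vL) \<union> set (leaves vR) \<subseteq> {1..m}" by simp
        then have False using fm_notdep[OF m fdep] by blast }
      moreover
      { assume "VNode vL vR \<in> subtrees (rlt (m+1) (2*m))"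
        then have "set (leaves (VNode vL vR)) \<subseteq> {m+1..2*m}"
          using subtrees_leaves leaves_Z[OF m] by metis
        then have "set (leaves vL) \<union> set (leaves vR) \<subseteq> {m+1..2*m}" by simp
        then have False using fm_notdep[OF m fdep] by blast }
      ultimately have "VNode vL vR = Tm m" by blast
      then show ?thesis by (simp add: Tm_def)
    qed
    have part: "is_partition (map (\<lambda>g a. eval_node gs a (fst (the (and_inputs gs g)))) ls)" by (rule sdd_or(6))
    have disj: "\<And>i j a. i < length ls \<Longrightarrow> j < length ls \<Longrightarrow> i \<noteq> j \<Longrightarrow> \<not> (P i a \<and> P j a)"
     and nonempty: "\<And>i. i < length ls \<Longrightarrow> \<exists>a. P i a"
     and cover: "\<And>a. \<exists>i<length ls. P i a"
    proof -
      define fs where "fs = map (\<lambda>g a. eval_node gs a (fst (the (and_inputs gs g)))) ls"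
      have lfs: "length fs = length ls" unfolding fs_def by simp
      have pi: "\<And>i. i < length ls \<Longrightarrow> fs ! i = P i"
        unfolding fs_def by (simp add: P_def fun_eq_iff)
      have q1: "\<forall>i<length fs. \<forall>j<length fs. i \<noteq> j \<longrightarrow> (\<forall>a. \<not> ((fs ! i) a \<and> (fs ! j) a))"
       and q2: "\<forall>i<length fs. \<exists>a. (fs ! i) a"
       and q3: "\<forall>a. \<exists>i<length fs. (fs ! i) a"
        using part unfolding fs_def[symmetric] is_partition_def by blast+
      show "\<And>i j a. i < length ls \<Longrightarrow> j < length ls \<Longrightarrow> i \<noteq> j \<Longrightarrow> \<not> (P i a \<and> P j a)"
      proof -
        fix i j a assume h: "i < length ls" "j < length ls" "i \<noteq> j"
        have "\<not> ((fs ! i) a \<and> (fs ! j) a)" using q1 h lfs by simp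
        then show "\<not> (P i a \<and> P j a)" using pi[OF h(1)] pi[OF h(2)] by simp
      qed
      show "\<And>i. i < length ls \<Longrightarrow> \<exists>a. P i a"
      proof -
        fix i assume h: "i < length ls"
        have "\<exists>a. (fs ! i) a" using q2 h lfs by simp
        then show "\<exists>a. P i a" using pi[OF h] by simp
      qed
      show "\<And>a. \<exists>i<length ls. P i a"
      proof -
        fix a
        obtain i where h: "i < length fs" "(fs ! i) a" using q3 by blast
        then show "\<exists>i<length ls. P i a" using pi[of i] lfs by auto
      qed
    qed
    have lvL: "set (leaves vL) = {1..m}" using node leaves_Y[OF m] by simp
    have lvR: "set (leaves vR) = {m+1..2*m}" using node leaves_Z[OF m] by simp
    have claim: False if S: "S \<subseteq> {1..m}" "S' \<subseteq> {1..m}" and k: "k < length ls"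
      and pk: "P k (\<lambda>x. x \<in> S)" "P k (\<lambda>x. x \<in> S')" and d: "d \<in> S" "d \<notin> S'" for S S' k d
    proof -
      define b where "b = (\<lambda>x. x \<in> S \<or> x = m+d)"
      define b' where "b' = (\<lambda>x. x \<in> S' \<or> x = m+d)"
      have d1: "1 \<le> d" "d \<le> m" using d S by auto
      have "P k b = P k (\<lambda>x. x \<in> S)" by (rule Pdep[OF k]) (use lvL d1 in \<open>auto simp: b_def\<close>)
      then have pb: "P k b" using pk by simp
      have "P k b' = P k (\<lambda>x. x \<in> S')" by (rule Pdep[OF k]) (use lvL d1 in \<open>auto simp: b'_def\<close>)
      then have pb': "P k b'" using pk by simp
      have fb: "fm m b" using fm_b_true[OF S(1) d(1)] unfolding b_def .
      have fb': "\<not> fm m b'" using fm_b_false[OF S(2) d(2) d1] unfolding b'_def .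
      obtain i where i: "i < length ls" "P i b" "Sb i b" using fb evj by blast
      have "i = k" using disj[OF i(1) k] i(2) pb by blast
      then have sk: "Sb k b" using i by simp
      have "Sb k b' = Sb k b" by (rule Sdep[OF k]) (use lvR S in \<open>auto simp: b_def b'_def\<close>)
      then have "fm m b'" using evj k pb' sk by blast
      then show False using fb' by simp
    qed
    define kap where "kap S = (SOME k. k < length ls \<and> P k (\<lambda>x. x \<in> S))" for S
    have kap: "kap S < length ls \<and> P (kap S) (\<lambda>x. x \<in> S)" for S
      unfolding kap_def by (rule someI_ex) (use cover in blast)
    have inj: "inj_on kap (Pow {1..m})"
    proof (rule inj_onI)
      fix S S' assume S: "S \<in> Pow {1..m}" "S' \<in> Pow {1..m}" and eq: "kap S = kap S'"
      show "S = S'"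
      proof (rule ccontr)
        assume "S \<noteq> S'"
        then obtain d where "d \<in> S \<and> d \<notin> S' \<or> d \<in> S' \<and> d \<notin> S" by blast
        then show False
        proof
          assume "d \<in> S \<and> d \<notin> S'"
          then show False by (intro claim[of S S' "kap S" d]) (use S eq kap[of S] kap[of S'] in auto)
        next
          assume "d \<in> S' \<and> d \<notin> S"
          then show False by (intro claim[of S' S "kap S" d]) (use S eq kap[of S] kap[of S'] in auto)
        qed
      qed
    qed
    have "(2::nat)^m = card (Pow {1..m})" by (simp add: card_Pow)
    also have "\<dots> = card (kap ` Pow {1..m})" using card_image[OF inj] by simp
    also have "\<dots> \<le> card {..<length ls}" by (rule card_mono) (use kap in auto)
    also have "\<dots> = length ls" by simp
    finally have c1: "2^m \<le> length ls" .
    have dist: "distinct ls"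
    proof (rule distinct_conv_nth[THEN iffD2], intro allI impI)
      fix i j assume ij: "i < length ls" "j < length ls" "i \<noteq> j"
      show "ls ! i \<noteq> ls ! j"
      proof
        assume e: "ls ! i = ls ! j"
        obtain a where "P i a" using nonempty[OF ij(1)] by blast
        moreover have "P j a = P i a" unfolding P_def using e by simp
        ultimately show False using disj[OF ij] by blast
      qed
    qed
    have sub: "set ls \<subseteq> Gate ` {..<length gs}"
    proof
      fix v assume "v \<in> set ls"
      then obtain k where k: "k < length ls" "v = ls ! k" by (auto simp: in_set_conv_nth)
      obtain p s where "and_inputs gs v = Some (p, s)" using ps[OF k(1)] k by blast
      then show "v \<in> Gate ` {..<length gs}" using and_inputs_SomeD[of gs v p s] by auto
    qed
    have "length ls = card (set ls)" using distinct_card[OF dist] by simp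
    also have "\<dots> \<le> card (Gate ` {..<length gs} :: nat inp set)" using card_mono[OF finite_imageI[OF finite_lessThan] sub] .
    also have "\<dots> \<le> length gs" using card_image_le[of "{..<length gs}" "Gate :: nat \<Rightarrow> nat inp"] by simp
    finally have "length ls \<le> length gs" .
    then show ?thesis using c1 C unfolding csize_def by simp
  qed
qed



lemma fm_cong1: assumes "\<forall>i\<in>{1..2*m}. a i = b i" "fm m a" shows "fm m b"
proof -
  obtain t where t: "t < m" "a (m-t)" "a (2*m-t)" "\<forall>k. 2*m-t < k \<and> k \<le> 2*m \<longrightarrow> \<not> a k"
    using assms(2) unfolding fm_def by blast
  have "b (m-t)" using t assms(1) by (metis atLeastAtMost_iff Suc_leI zero_less_diff diff_le_self le_trans mult_2 le_add1 One_nat_def)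
  moreover have "b (2*m-t)" using t assms(1) by (metis atLeastAtMost_iff Suc_leI zero_less_diff diff_le_self mult_2 less_le_trans trans_less_add1 One_nat_def)
  moreover have "\<forall>k. 2*m-t < k \<and> k \<le> 2*m \<longrightarrow> \<not> b k"
  proof (intro allI impI)
    fix k assume k: "2*m-t < k \<and> k \<le> 2*m"
    then have "k \<in> {1..2*m}" by auto
    then show "\<not> b k" using t(4) k assms(1) by auto
  qed
  ultimately show ?thesis using t(1) unfolding fm_def by blast
qed

lemma fm_cong: "\<forall>i\<in>{1..2*m}. a i = b i \<Longrightarrow> fm m a = fm m b"
  using fm_cong1[of m a b] fm_cong1[of m b a] by auto

theorem mainTheorem1:
  shows "\<exists>(N :: nat set) (f :: nat \<Rightarrow> (nat \<Rightarrow> bool) \<Rightarrow> bool) (T :: nat \<Rightarrow> nat vtree).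
     infinite N
   \<and> (\<forall>n\<in>N. vtree_for (T n) {1..n})
   \<and> (\<forall>n\<in>N. \<forall>a b. (\<forall>i\<in>{1..n}. a i = b i) \<longrightarrow> f n a = f n b)
   \<and> (\<exists>(c :: real) (k :: nat). \<forall>n\<in>N.
        (\<exists>C. structured_dDNNF {1..n} (T n) C \<and> represents C (f n)
             \<and> real (csize C) \<le> c * real n ^ k)
      \<and> (\<exists>C. structured_dDNNF {1..n} (T n) C \<and> represents C (\<lambda>a. \<not> f n a)
             \<and> real (csize C) \<le> c * real n ^ k))
   \<and> (\<exists>(\<epsilon> :: real) > 0. \<exists>n0. \<forall>n\<in>N. n \<ge> n0 \<longrightarrow>
        (\<forall>C. is_SDD {1..n} (T n) C \<and> represents C (f n) \<longrightarrow> 2 powr (\<epsilon> * real n) \<le> real (csize C)))"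
proof (intro exI conjI)
  let ?N = "{n::nat. \<exists>m::nat\<ge>1. n = 2*m}"
  show "infinite ?N"
    unfolding finite_nat_set_iff_bounded_le
  proof
    assume "\<exists>m. \<forall>n\<in>?N. n \<le> m"
    then obtain m where "\<forall>n\<in>?N. n \<le> m" by blast
    moreover have "2*(m+1) \<in> ?N" by auto
    ultimately show False by fastforce
  qed
  show "\<forall>n\<in>?N. vtree_for (Tm (n div 2)) {1..n}"
  proof
    fix n assume "n \<in> ?N"
    then obtain m where m: "m \<ge> 1" "n = 2*m" by blast
    then show "vtree_for (Tm (n div 2)) {1..n}" using Tm_for[OF m(1)] by simp
  qed
  show "\<forall>n\<in>?N. \<forall>a b. (\<forall>i\<in>{1..n}. a i = b i) \<longrightarrow> fm (n div 2) a = fm (n div 2) b"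
  proof (intro ballI allI impI)
    fix n and a b :: "nat \<Rightarrow> bool" assume "n \<in> ?N" and ag: "\<forall>i\<in>{1..n}. a i = b i"
    then obtain m where m: "m \<ge> 1" "n = 2*m" by blast
    then show "fm (n div 2) a = fm (n div 2) b" using fm_cong[of m a b] ag by simp
  qed
  show "\<forall>n\<in>?N.
        (\<exists>C. structured_dDNNF {1..n} (Tm (n div 2)) C \<and> represents C (fm (n div 2))
             \<and> real (csize C) \<le> 3 * real n ^ 1)
      \<and> (\<exists>C. structured_dDNNF {1..n} (Tm (n div 2)) C \<and> represents C (\<lambda>a. \<not> fm (n div 2) a)
             \<and> real (csize C) \<le> 3 * real n ^ 1)"
  proof
    fix n assume "n \<in> ?N"
    then obtain m where m: "m \<ge> 1" "n = 2*m" by blast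
    have nd: "n div 2 = m" using m by simp
    have sz: "real (csize (gsm m, Gate oo)) \<le> 3 * real n ^ 1" for oo
      using m by (simp add: csize_def)
    have d1: "structured_dDNNF {1..n} (Tm (n div 2)) (gsm m, Gate (4*m))"
      unfolding structured_dDNNF_def nd using m gsm_nnf gsm_decomp gsm_det gsm_resp by simp
    have d2: "structured_dDNNF {1..n} (Tm (n div 2)) (gsm m, Gate (4*m+1))"
      unfolding structured_dDNNF_def nd using m gsm_nnf gsm_decomp gsm_det gsm_resp by simp
    have r1: "represents (gsm m, Gate (4*m)) (fm (n div 2))"
      unfolding represents_def nd using pos_sem[OF m(1)] by simp
    have r2: "represents (gsm m, Gate (4*m+1)) (\<lambda>a. \<not> fm (n div 2) a)"
      unfolding represents_def nd using neg_sem[OF m(1)] by simp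
    show "(\<exists>C. structured_dDNNF {1..n} (Tm (n div 2)) C \<and> represents C (fm (n div 2))
             \<and> real (csize C) \<le> 3 * real n ^ 1)
      \<and> (\<exists>C. structured_dDNNF {1..n} (Tm (n div 2)) C \<and> represents C (\<lambda>a. \<not> fm (n div 2) a)
             \<and> real (csize C) \<le> 3 * real n ^ 1)"
      using d1 d2 r1 r2 sz by blast
  qed
  show "(1/2::real) > 0" by simp
  show "\<forall>n\<in>?N. n \<ge> 0 \<longrightarrow>
        (\<forall>C. is_SDD {1..n} (Tm (n div 2)) C \<and> represents C (fm (n div 2)) \<longrightarrow> 2 powr (1/2 * real n) \<le> real (csize C))"
  proof (intro ballI impI allI)
    fix n C assume "n \<in> ?N" and h: "is_SDD {1..n} (Tm (n div 2)) C \<and> represents C (fm (n div 2))"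
    then obtain m where m: "m \<ge> 1" "n = 2*m" by blast
    have nd: "n div 2 = m" using m by simp
    have "2^m \<le> csize C" using lower[OF m(1)] h m nd by simp
    then have "real (2^m) \<le> real (csize C)" by linarith
    moreover have "2 powr (1/2 * real n) = real (2^m)" using m by (simp add: powr_realpow)
    ultimately show "2 powr (1/2 * real n) \<le> real (csize C)" by simp
  qed
qed


end
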